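(* For any simple undirected graph $G$, $$n_G(\mathcal{C}_3\oplus\mathcal{L}_2)=\frac13\sum_{\{st,uv\}\in Q}\Big(\sum_{w\in\Gamma(s)\setminus\{s,t,u,v\}}a_{tw}+\sum_{w\in\Gamma(u)\setminus\{s,t,u,v\}}a_{vw}\Big).$$
   Context: $a_{ij}$ adjacency entries, $\Gamma(x)$ neighbourhood of $x$. $Q$ is the set of unordered pairs $\{st,uv\}$ of edges with $s,t,u,v$ pairwise distinct. $\mathcal{C}_3\oplus\mathcal{L}_2$ is the disjoint union of a triangle and a single edge (5 vertices). $n_G(F)$ counts (not necessarily induced) subgraphs isomorphic to $F$. *)

theory Defs
  imports Complex_Main
begin

definition simple_graph :: "'a set \<Rightarrow> ('a \<Rightarrow> 'a \<Rightarrow> bool) \<Rightarrow> bool" where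
  "simple_graph V E \<longleftrightarrow> finite V \<and> (\<forall>x y. E x y \<longrightarrow> E y x) \<and> (\<forall>x. \<not> E x x)
     \<and> (\<forall>x y. E x y \<longrightarrow> x \<in> V \<and> y \<in> V)"

definition edges :: "'a set \<Rightarrow> ('a \<Rightarrow> 'a \<Rightarrow> bool) \<Rightarrow> 'a set set" where
  "edges V E = {{x, y} | x y. x \<in> V \<and> y \<in> V \<and> E x y}"

definition adj :: "('a \<Rightarrow> 'a \<Rightarrow> bool) \<Rightarrow> 'a \<Rightarrow> 'a \<Rightarrow> real" where
  "adj E i j = (if E i j then 1 else 0)"

definition nbhd :: "'a set \<Rightarrow> ('a \<Rightarrow> 'a \<Rightarrow> bool) \<Rightarrow> 'a \<Rightarrow> 'a set" where
  "nbhd V E x = {y \<in> V. E x y}"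

text \<open>n_G(F): number of (not necessarily induced) subgraphs (W, D) of G
(W \<subseteq> V, D a set of edges of G with endpoints in W) isomorphic to the pattern
graph F = (VF, EF), where EF is a set of 2-element subsets of VF.\<close>
definition subgraph_count ::
  "'a set \<Rightarrow> ('a \<Rightarrow> 'a \<Rightarrow> bool) \<Rightarrow> 'b set \<Rightarrow> 'b set set \<Rightarrow> nat" where
  "subgraph_count V E VF EF = card {(W, D). W \<subseteq> V \<and> D \<subseteq> edges V E \<and> (\<forall>e\<in>D. e \<subseteq> W)
      \<and> (\<exists>f. bij_betw f VF W \<and> (\<forall>x\<in>VF. \<forall>y\<in>VF. {x, y} \<in> EF \<longleftrightarrow> {f x, f y} \<in> D))}"

definition C3_L2_vertices :: "nat set" where
  "C3_L2_vertices = {0, 1, 2, 3, 4}"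

definition C3_L2_edges :: "nat set set" where
  "C3_L2_edges = {{0, 1}, {1, 2}, {0, 2}, {3, 4}}"

definition Qpairs :: "'a set \<Rightarrow> ('a \<Rightarrow> 'a \<Rightarrow> bool) \<Rightarrow> 'a set set set" where
  "Qpairs V E = {{{s, t}, {u, v}} | s t u v. E s t \<and> E u v \<and>
      s \<noteq> t \<and> s \<noteq> u \<and> s \<noteq> v \<and> t \<noteq> u \<and> t \<noteq> v \<and> u \<noteq> v}"

text \<open>Endpoint labelling of an unordered edge e = st: s = first_end e, t = second_end e.\<close>
definition first_end :: "'a set \<Rightarrow> 'a" where
  "first_end e = (SOME x. x \<in> e)"

definition second_end :: "'a set \<Rightarrow> 'a" where
  "second_end e = (SOME y. y \<in> e \<and> y \<noteq> first_end e)"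

definition Q_term :: "'a set \<Rightarrow> ('a \<Rightarrow> 'a \<Rightarrow> bool) \<Rightarrow> 'a set set \<Rightarrow> real" where
  "Q_term V E p = (\<Sum>e\<in>p. \<Sum>w \<in> nbhd V E (first_end e) - \<Union>p. adj E (second_end e) w)"

end

theory Submission
  imports Defs
begin


definition Kset :: "'a set \<Rightarrow> ('a \<Rightarrow> 'a \<Rightarrow> bool) \<Rightarrow> ('a set \<times> 'a set) set" where
  "Kset V E = {(A,F). A \<subseteq> V \<and> card A = 3 \<and> (\<forall>x\<in>A. \<forall>y\<in>A. x \<noteq> y \<longrightarrow> E x y)
      \<and> F \<in> edges V E \<and> A \<inter> F = {}}"

definition phi :: "'a set \<times> 'a set \<Rightarrow> 'a set \<times> 'a set set" where
  "phi AF = (fst AF \<union> snd AF, {{x,y} | x y. x \<in> fst AF \<and> y \<in> fst AF \<and> x \<noteq> y} \<union> {snd AF})"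

definition recA :: "'a set set \<Rightarrow> 'a set" where
  "recA D = {x. \<exists>e1\<in>D. \<exists>e2\<in>D. e1 \<noteq> e2 \<and> x \<in> e1 \<and> x \<in> e2}"

lemma phi_concrete:
  assumes "distinct [a,b,c,d,e]"
  shows "phi ({a,b,c},{d,e}) = ({a,b,c,d,e}, {{a,b},{b,c},{a,c},{d,e}})"
  using assms unfolding phi_def by (auto simp: doubleton_eq_iff insert_commute)

lemma recA_concrete:
  assumes "distinct [a,b,c,d,e]"
  shows "recA {{a,b},{b,c},{a,c},{d,e}} = {a,b,c}"
  using assms unfolding recA_def by (auto simp: doubleton_eq_iff)

lemma edges_iff: "simple_graph V E \<Longrightarrow> F \<in> edges V E \<longleftrightarrow> (\<exists>x y. F = {x,y} \<and> E x y)"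
  unfolding edges_def simple_graph_def by blast

lemma edge_E: assumes "simple_graph V E" "{x,y} \<in> edges V E" shows "E x y"
proof -
  obtain u v where "{x,y} = {u,v}" "E u v" using assms edges_iff by blast
  then show ?thesis using assms(1) unfolding simple_graph_def by (metis doubleton_eq_iff)
qed

lemma K_elim:
  assumes "simple_graph V E" "(A,F) \<in> Kset V E"
  obtains a b c d e where "distinct [a,b,c,d,e]" "A = {a,b,c}" "F = {d,e}"
    "E a b" "E b c" "E a c" "E d e" "a \<in> V" "b \<in> V" "c \<in> V" "d \<in> V" "e \<in> V"
proof -
  from assms(2) have A: "A \<subseteq> V" "card A = 3" "\<forall>x\<in>A. \<forall>y\<in>A. x \<noteq> y \<longrightarrow> E x y"
    "F \<in> edges V E" "A \<inter> F = {}" by (auto simp: Kset_def)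
  from A(2) obtain a b c where abc: "A = {a,b,c}" "a \<noteq> b" "b \<noteq> c" "a \<noteq> c"
    by (auto simp: card_3_iff)
  from A(4) assms(1) obtain d e where de: "F = {d,e}" "E d e" by (auto simp: edges_iff)
  have "d \<noteq> e" using de assms(1) by (auto simp: simple_graph_def)
  moreover have "d \<in> V" "e \<in> V" using de assms(1) by (auto simp: simple_graph_def)
  ultimately show ?thesis using that[of a b c d e] abc de A by auto
qed

lemma inj_phi: assumes "simple_graph V E" shows "inj_on phi (Kset V E)"
proof (rule inj_onI)
  fix x y assume x: "x \<in> Kset V E" and y: "y \<in> Kset V E" and eq: "phi x = phi y"
  obtain A F where xAF: "x = (A,F)" by force
  obtain A' F' where yAF: "y = (A',F')" by force
  have key: "recA (snd (phi (A,F))) = A \<and> fst (phi (A,F)) - A = F" if AF: "(A,F) \<in> Kset V E" for A F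
  proof -
    obtain a b c d e where "distinct [a,b,c,d,e]" "A = {a,b,c}" "F = {d,e}"
      using K_elim[OF assms AF] by metis
    then show ?thesis using phi_concrete[of a b c d e] recA_concrete[of a b c d e] by auto
  qed
  from key[of A F] key[of A' F'] x y eq show "x = y" unfolding xAF yAF by metis
qed

definition Sset :: "'a set \<Rightarrow> ('a \<Rightarrow> 'a \<Rightarrow> bool) \<Rightarrow> ('a set \<times> 'a set set) set" where
  "Sset V E = {(W, D). W \<subseteq> V \<and> D \<subseteq> edges V E \<and> (\<forall>e\<in>D. e \<subseteq> W)
      \<and> (\<exists>f. bij_betw f C3_L2_vertices W \<and> (\<forall>x\<in>C3_L2_vertices. \<forall>y\<in>C3_L2_vertices. {x, y} \<in> C3_L2_edges \<longleftrightarrow> {f x, f y} \<in> D))}"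

lemma phi_in_S:
  assumes "simple_graph V E" "p \<in> Kset V E" shows "phi p \<in> Sset V E"
proof -
  obtain A F where p: "p = (A,F)" by force
  obtain a b c d e where h: "distinct [a,b,c,d,e]" "A = {a,b,c}" "F = {d,e}"
    "E a b" "E b c" "E a c" "E d e" "a \<in> V" "b \<in> V" "c \<in> V" "d \<in> V" "e \<in> V"
    using K_elim[OF assms(1)] assms(2) p by metis
  define f :: "nat \<Rightarrow> 'a" where "f i = (if i = 0 then a else if i = 1 then b else if i = 2 then c
      else if i = 3 then d else e)" for i
  have "bij_betw f C3_L2_vertices {a,b,c,d,e}"
    using h(1) unfolding bij_betw_def inj_on_def C3_L2_vertices_def f_def by auto
  moreover have "\<forall>x\<in>C3_L2_vertices. \<forall>y\<in>C3_L2_vertices. {x, y} \<in> C3_L2_edges \<longleftrightarrow>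
      {f x, f y} \<in> {{a,b},{b,c},{a,c},{d,e}}"
    using h(1) unfolding C3_L2_vertices_def C3_L2_edges_def f_def
    by (auto simp: doubleton_eq_iff)
  moreover have "{{a,b},{b,c},{a,c},{d,e}} \<subseteq> edges V E"
    using h assms(1) by (auto simp: edges_iff)
  ultimately show ?thesis using h p phi_concrete[OF h(1)] unfolding Sset_def by auto
qed

lemma S_sub:
  assumes G: "simple_graph V E" "q \<in> Sset V E" shows "q \<in> phi ` Kset V E"
proof -
  obtain W D where q: "q = (W,D)" by force
  from assms(2) q have W: "W \<subseteq> V" and D: "D \<subseteq> edges V E" and DW: "\<forall>e\<in>D. e \<subseteq> W"
    and "\<exists>f. bij_betw f C3_L2_vertices W \<and> (\<forall>x\<in>C3_L2_vertices. \<forall>y\<in>C3_L2_vertices. {x, y} \<in> C3_L2_edges \<longleftrightarrow> {f x, f y} \<in> D)"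
    unfolding Sset_def by auto
  then obtain f where bij: "bij_betw f C3_L2_vertices W" and
    iff: "\<forall>x\<in>C3_L2_vertices. \<forall>y\<in>C3_L2_vertices. {x, y} \<in> C3_L2_edges \<longleftrightarrow> {f x, f y} \<in> D" by blast
  define a b c d e where "a = f 0" "b = f 1" "c = f 2" "d = f 3" "e = f 4"
  have Wi: "W = {a,b,c,d,e}" using bij unfolding bij_betw_def C3_L2_vertices_def a_b_c_d_e_def by auto
  have dist: "distinct [a,b,c,d,e]" using bij unfolding bij_betw_def inj_on_def C3_L2_vertices_def a_b_c_d_e_def
    by (auto simp del: One_nat_def)
  have inD: "{a,b} \<in> D" "{b,c} \<in> D" "{a,c} \<in> D" "{d,e} \<in> D"
    using iff unfolding C3_L2_vertices_def C3_L2_edges_def a_b_c_d_e_def by auto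
  have Dsub: "D \<subseteq> {{a,b},{b,c},{a,c},{d,e}}"
  proof
    fix g assume g: "g \<in> D"
    then obtain x y where xy: "g = {x,y}" "E x y" using D edges_iff[OF G(1)] by blast
    have "x \<in> W" "y \<in> W" using DW g xy by auto
    then obtain i j where ij: "i \<in> C3_L2_vertices" "j \<in> C3_L2_vertices" "x = f i" "y = f j"
      using bij unfolding bij_betw_def by blast
    then have "{i,j} \<in> C3_L2_edges" using iff g xy by auto
    then have "{i,j} = {0,1} \<or> {i,j} = {1,2} \<or> {i,j} = {0,2} \<or> {i,j} = {3,4}"
      unfolding C3_L2_edges_def by auto
    then show "g \<in> {{a,b},{b,c},{a,c},{d,e}}"
      unfolding xy ij a_b_c_d_e_def by (auto simp: doubleton_eq_iff)
  qed
  have Deq: "D = {{a,b},{b,c},{a,c},{d,e}}" using Dsub inD by auto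
  have Ee: "E a b" "E b c" "E a c" "E d e"
    using inD D edge_E[OF G(1)] by blast+
  have "({a,b,c},{d,e}) \<in> Kset V E"
  proof -
    have sym: "E y x" if "E x y" for x y using G(1) that unfolding simple_graph_def by blast
    show ?thesis
    unfolding Kset_def using dist Ee W Wi edges_iff[OF G(1)] sym
    by (auto simp: card_3_iff)
  qed
  moreover have "q = phi ({a,b,c},{d,e})" using q Wi Deq phi_concrete[OF dist] by simp
  ultimately show ?thesis by blast
qed

lemma S_eq: assumes "simple_graph V E" shows "Sset V E = phi ` Kset V E"
  using S_sub[OF assms] phi_in_S[OF assms] by blast



definition P2 :: "'a set \<Rightarrow> ('a \<Rightarrow> 'a \<Rightarrow> bool) \<Rightarrow> ('a set \<times> 'a set) set" where
  "P2 V E = {(e,f). e \<in> edges V E \<and> f \<in> edges V E \<and> e \<inter> f = {}}"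

definition Tset :: "'a set \<Rightarrow> ('a \<Rightarrow> 'a \<Rightarrow> bool) \<Rightarrow> 'a set \<Rightarrow> 'a set \<Rightarrow> 'a set" where
  "Tset V E e U = {w \<in> V - U. \<forall>x\<in>e. E x w}"

lemma fin_edges: assumes "simple_graph V E" shows "finite (edges V E)"
proof -
  have "edges V E \<subseteq> Pow V" unfolding edges_def by auto
  moreover have "finite V" using assms simple_graph_def by blast
  ultimately show ?thesis by (meson finite_Pow_iff finite_subset)
qed

lemma edge_elim: assumes "simple_graph V E" "e \<in> edges V E"
  obtains s t where "e = {s,t}" "s \<noteq> t" "E s t" "s \<in> V" "t \<in> V"
  using assms unfolding edges_def simple_graph_def by blast

lemma Q_eq: assumes "simple_graph V E"
  shows "Qpairs V E = {{e,f} | e f. (e,f) \<in> P2 V E}"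
proof
  show "Qpairs V E \<subseteq> {{e,f} | e f. (e,f) \<in> P2 V E}"
  proof
    fix p assume "p \<in> Qpairs V E"
    then obtain s t u v where p: "p = {{s,t},{u,v}}" "E s t" "E u v" "s \<noteq> t" "s \<noteq> u" "s \<noteq> v"
      "t \<noteq> u" "t \<noteq> v" "u \<noteq> v" unfolding Qpairs_def by blast
    have "({s,t},{u,v}) \<in> P2 V E" unfolding P2_def using p edges_iff[OF assms] by auto
    then show "p \<in> {{e,f} | e f. (e,f) \<in> P2 V E}" using p by blast
  qed
next
  show "{{e,f} | e f. (e,f) \<in> P2 V E} \<subseteq> Qpairs V E"
  proof
    fix p assume "p \<in> {{e,f} | e f. (e,f) \<in> P2 V E}"
    then obtain e f where p: "p = {e,f}" "e \<in> edges V E" "f \<in> edges V E" "e \<inter> f = {}"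
      unfolding P2_def by blast
    obtain s t where st: "e = {s,t}" "s \<noteq> t" "E s t" using edge_elim[OF assms p(2)] by metis
    obtain u v where uv: "f = {u,v}" "u \<noteq> v" "E u v" using edge_elim[OF assms p(3)] by metis
    show "p \<in> Qpairs V E" unfolding Qpairs_def using p st uv by blast
  qed
qed

lemma ends: assumes "e = {s,t}" "s \<noteq> t"
  shows "{first_end e, second_end e} = e" "first_end e \<noteq> second_end e"
proof -
  have f: "first_end e \<in> e" unfolding first_end_def using assms by (metis insertI1 someI)
  have "\<exists>y. y \<in> e \<and> y \<noteq> first_end e" using assms f by auto
  then have s: "second_end e \<in> e \<and> second_end e \<noteq> first_end e"
    unfolding second_end_def by (rule someI_ex)
  show "{first_end e, second_end e} = e" "first_end e \<noteq> second_end e"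
    using f s assms by auto
qed

lemma QT: assumes G: "simple_graph V E" and p: "p \<in> Qpairs V E"
  shows "Q_term V E p = (\<Sum>e\<in>p. real (card (Tset V E e (\<Union>p))))"
  unfolding Q_term_def
proof (rule sum.cong[OF refl])
  fix e assume "e \<in> p"
  then obtain s t where st: "e = {s,t}" "s \<noteq> t" using p unfolding Qpairs_def by blast
  have fin: "finite V" using G simple_graph_def by blast
  let ?a = "first_end e" and ?b = "second_end e"
  have "(\<Sum>w\<in>nbhd V E ?a - \<Union>p. adj E ?b w) = (\<Sum>w\<in>{w \<in> nbhd V E ?a - \<Union>p. E ?b w}. 1)"
    unfolding adj_def by (rule sum.inter_filter[symmetric]) (use fin in \<open>auto simp: nbhd_def\<close>)
  also have "{w \<in> nbhd V E ?a - \<Union>p. E ?b w} = Tset V E e (\<Union>p)"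
    using ends[OF st] unfolding Tset_def nbhd_def by (auto, metis insert_iff singletonD)
  finally show "(\<Sum>w\<in>nbhd V E ?a - \<Union>p. adj E ?b w) = real (card (Tset V E e (\<Union>p)))" by simp
qed



lemma fin_P2: assumes "simple_graph V E" shows "finite (P2 V E)"
proof -
  have "P2 V E \<subseteq> edges V E \<times> edges V E" unfolding P2_def by auto
  then show ?thesis using fin_edges[OF assms] by (meson finite_SigmaI finite_subset)
qed

lemma sum_Q: assumes G: "simple_graph V E"
  shows "(\<Sum>p\<in>Qpairs V E. \<Sum>e\<in>p. h e (\<Union>p)) = (\<Sum>(e,f)\<in>P2 V E. h e (e \<union> f))"
proof -
  have finQ: "finite (Qpairs V E)" unfolding Q_eq[OF G]
  proof -
    have "{{e,f} | e f. (e,f) \<in> P2 V E} = (\<lambda>(e,f). {e,f}) ` P2 V E" by auto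
    then show "finite {{e,f} | e f. (e,f) \<in> P2 V E}" using fin_P2[OF G] by simp
  qed
  have "(\<Sum>p\<in>Qpairs V E. \<Sum>e\<in>p. h e (\<Union>p)) = (\<Sum>(p,e)\<in>Sigma (Qpairs V E) (\<lambda>p. p). h e (\<Union>p))"
    by (rule sum.Sigma) (use finQ in \<open>auto simp: Q_eq[OF G]\<close>)
  also have "\<dots> = (\<Sum>(e,f)\<in>P2 V E. h e (e \<union> f))"
  proof -
    have bij: "bij_betw (\<lambda>(e,f). ({e,f}, e)) (P2 V E) (Sigma (Qpairs V E) (\<lambda>p. p))"
    proof (rule bij_betwI')
      fix x y assume "x \<in> P2 V E" "y \<in> P2 V E"
      then show "((case x of (e, f) \<Rightarrow> ({e, f}, e)) = (case y of (e, f) \<Rightarrow> ({e, f}, e))) = (x = y)"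
        unfolding P2_def by (auto simp: doubleton_eq_iff)
    next
      fix x assume "x \<in> P2 V E" then show "(case x of (e, f) \<Rightarrow> ({e, f}, e)) \<in> Sigma (Qpairs V E) (\<lambda>p. p)"
        unfolding Q_eq[OF G] by (cases x) auto
    next
      fix y assume "y \<in> Sigma (Qpairs V E) (\<lambda>p. p)"
      then obtain e f g where y: "y = ({e,f}, g)" "(e,f) \<in> P2 V E" "g \<in> {e,f}"
        unfolding Q_eq[OF G] by auto
      show "\<exists>x\<in>P2 V E. y = (case x of (e, f) \<Rightarrow> ({e, f}, e))"
      proof (cases "g = e")
        case True then show ?thesis using y by force
      next
        case False then have "g = f" using y by auto
        moreover have "(f,e) \<in> P2 V E" using y unfolding P2_def by auto
        ultimately show ?thesis using y by (intro bexI[of _ "(f,e)"]) (auto simp: insert_commute)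
      qed
    qed
    have "(\<Sum>(e,f)\<in>P2 V E. h e (e \<union> f)) = (\<Sum>x\<in>P2 V E. (\<lambda>(p,e). h e (\<Union>p)) ((\<lambda>(e,f). ({e,f}, e)) x))"
      by (rule sum.cong) auto
    also have "\<dots> = (\<Sum>(p,e)\<in>Sigma (Qpairs V E) (\<lambda>p. p). h e (\<Union>p))"
      by (rule sum.reindex_bij_betw[OF bij])
    finally show ?thesis by simp
  qed
  finally show ?thesis .
qed



definition Xset :: "'a set \<Rightarrow> ('a \<Rightarrow> 'a \<Rightarrow> bool) \<Rightarrow> (('a set \<times> 'a set) \<times> 'a) set" where
  "Xset V E = Sigma (P2 V E) (\<lambda>(e,f). Tset V E e (e \<union> f))"

lemma sum_X: assumes G: "simple_graph V E"
  shows "(\<Sum>(e,f)\<in>P2 V E. real (card (Tset V E e (e \<union> f)))) = real (card (Xset V E))"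
proof -
  have fin: "finite V" using G simple_graph_def by blast
  have "card (Xset V E) = (\<Sum>x\<in>P2 V E. card ((\<lambda>(e,f). Tset V E e (e \<union> f)) x))"
    unfolding Xset_def by (rule card_SigmaI[OF fin_P2[OF G]]) (use fin in \<open>auto simp: Tset_def\<close>)
  then show ?thesis by (simp add: case_prod_unfold)
qed

lemma X_eq: assumes G: "simple_graph V E"
  shows "Xset V E = (\<Union>AF\<in>Kset V E. (\<lambda>w. ((fst AF - {w}, snd AF), w)) ` fst AF)"
proof
  have sym: "E y x" if "E x y" for x y using G that unfolding simple_graph_def by blast
  show "Xset V E \<subseteq> (\<Union>AF\<in>Kset V E. (\<lambda>w. ((fst AF - {w}, snd AF), w)) ` fst AF)"
  proof
    fix z assume "z \<in> Xset V E"
    then obtain e f w where z: "z = ((e,f),w)" "(e,f) \<in> P2 V E" "w \<in> Tset V E e (e \<union> f)"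
      unfolding Xset_def by auto
    then have ef: "e \<in> edges V E" "f \<in> edges V E" "e \<inter> f = {}" and
      w: "w \<in> V" "w \<notin> e" "w \<notin> f" "\<forall>x\<in>e. E x w" unfolding P2_def Tset_def by auto
    obtain s t where st: "e = {s,t}" "s \<noteq> t" "E s t" "s \<in> V" "t \<in> V" using edge_elim[OF G ef(1)] by metis
    have ws: "E s w" "E t w" using w st by auto
    have sw: "E w s" "E w t" "E t s" using ws st sym by blast+
    have K: "(insert w e, f) \<in> Kset V E" unfolding Kset_def
      using st w ef ws sw by (auto simp: card_3_iff)
    have "z = (\<lambda>w'. ((fst (insert w e, f) - {w'}, snd (insert w e, f)), w')) w" using z w by auto
    then show "z \<in> (\<Union>AF\<in>Kset V E. (\<lambda>w. ((fst AF - {w}, snd AF), w)) ` fst AF)"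
      using K by force
  qed
next
  show "(\<Union>AF\<in>Kset V E. (\<lambda>w. ((fst AF - {w}, snd AF), w)) ` fst AF) \<subseteq> Xset V E"
  proof safe
    have sym: "E y x" if "E x y" for x y using G that unfolding simple_graph_def by blast
    fix A F w assume K: "(A,F) \<in> Kset V E" and w: "w \<in> fst (A,F)"
    obtain a b c d e where h: "distinct [a,b,c,d,e]" "A = {a,b,c}" "F = {d,e}"
      "E a b" "E b c" "E a c" "E d e" "a \<in> V" "b \<in> V" "c \<in> V" "d \<in> V" "e \<in> V"
      using K_elim[OF G K] by metis
    have Fe: "F \<in> edges V E" using K unfolding Kset_def by auto
    have mem: "((A - {x}, F), x) \<in> Xset V E"
      if "A - {x} = {y,z}" "x \<in> V" "E y z" "E y x" "E z x" "x \<notin> F" "x \<noteq> y" "x \<noteq> z"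
         "y \<notin> F" "z \<notin> F" for x y z
    proof -
      have "{y,z} \<in> edges V E" using edges_iff[OF G] that(3) by blast
      then have "({y,z},F) \<in> P2 V E" unfolding P2_def using Fe that(9,10) by auto
      moreover have "x \<in> Tset V E {y,z} ({y,z} \<union> F)" unfolding Tset_def using that by auto
      ultimately show ?thesis unfolding Xset_def that(1) by auto
    qed
    have "w = a \<or> w = b \<or> w = c" using w h by auto
    then show "((fst (A,F) - {w}, snd (A,F)), w) \<in> Xset V E"
    proof (elim disjE)
      assume "w = a"
      moreover have "A - {a} = {b,c}" using h by auto
      ultimately show ?thesis using mem[of a b c] h sym[OF h(4)] sym[OF h(6)] by simp
    next
      assume "w = b"
      moreover have "A - {b} = {a,c}" using h by auto
      ultimately show ?thesis using mem[of b a c] h sym[OF h(5)] by (simp add: eq_commute[of b a])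
    next
      assume "w = c"
      moreover have "A - {c} = {a,b}" using h by auto
      ultimately show ?thesis using mem[of c a b] h by (simp add: eq_commute[of c a] eq_commute[of c b])
    qed
  qed
qed

lemma card_X: assumes G: "simple_graph V E"
  shows "card (Xset V E) = 3 * card (Kset V E)"
proof -
  have fin: "finite V" using G simple_graph_def by blast
  have finK: "finite (Kset V E)"
  proof -
    have "Kset V E \<subseteq> Pow V \<times> Pow V" unfolding Kset_def edges_def by auto
    then show ?thesis using fin by (meson finite_Pow_iff finite_SigmaI finite_subset)
  qed
  have "card (\<Union>AF\<in>Kset V E. (\<lambda>w. ((fst AF - {w}, snd AF), w)) ` fst AF)
      = (\<Sum>AF\<in>Kset V E. card ((\<lambda>w. ((fst AF - {w}, snd AF), w)) ` fst AF))"
  proof (rule card_UN_disjoint[OF finK])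
    show "\<forall>i\<in>Kset V E. finite ((\<lambda>w. ((fst i - {w}, snd i), w)) ` fst i)"
      using fin unfolding Kset_def by (auto intro: finite_subset)
    show "\<forall>i\<in>Kset V E. \<forall>j\<in>Kset V E. i \<noteq> j \<longrightarrow>
      (\<lambda>w. ((fst i - {w}, snd i), w)) ` fst i \<inter> (\<lambda>w. ((fst j - {w}, snd j), w)) ` fst j = {}"
    proof (intro ballI impI)
      fix i j assume "i \<in> Kset V E" "j \<in> Kset V E" "i \<noteq> j"
      show "(\<lambda>w. ((fst i - {w}, snd i), w)) ` fst i \<inter> (\<lambda>w. ((fst j - {w}, snd j), w)) ` fst j = {}"
      proof (rule ccontr)
        assume "\<not> ?thesis"
        then obtain w where "w \<in> fst i" "w \<in> fst j" "fst i - {w} = fst j - {w}" "snd i = snd j" by auto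
        then have "fst i = fst j" "snd i = snd j" by (metis insert_Diff)+
        then show False using \<open>i \<noteq> j\<close> by (simp add: prod_eq_iff)
      qed
    qed
  qed
  also have "\<dots> = (\<Sum>AF\<in>Kset V E. 3)"
  proof (rule sum.cong[OF refl])
    fix AF assume "AF \<in> Kset V E"
    then have "card (fst AF) = 3" unfolding Kset_def by auto
    moreover have "inj_on (\<lambda>w. ((fst AF - {w}, snd AF), w)) (fst AF)" by (auto simp: inj_on_def)
    ultimately show "card ((\<lambda>w. ((fst AF - {w}, snd AF), w)) ` fst AF) = 3" by (simp add: card_image)
  qed
  finally show ?thesis using X_eq[OF G] by simp
qed


theorem proposition4:
  fixes V :: "'a set" and E :: "'a \<Rightarrow> 'a \<Rightarrow> bool"
  assumes "simple_graph V E"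
  shows "real (subgraph_count V E C3_L2_vertices C3_L2_edges)
           = (1/3) * (\<Sum>p\<in>Qpairs V E. Q_term V E p)"
proof -
  have "subgraph_count V E C3_L2_vertices C3_L2_edges = card (Sset V E)"
    unfolding subgraph_count_def Sset_def by simp
  also have "\<dots> = card (Kset V E)"
    unfolding S_eq[OF assms] by (rule card_image[OF inj_phi[OF assms]])
  finally have L: "subgraph_count V E C3_L2_vertices C3_L2_edges = card (Kset V E)" .
  have "(\<Sum>p\<in>Qpairs V E. Q_term V E p) = (\<Sum>p\<in>Qpairs V E. \<Sum>e\<in>p. real (card (Tset V E e (\<Union>p))))"
    by (rule sum.cong[OF refl]) (rule QT[OF assms])
  also have "\<dots> = (\<Sum>(e,f)\<in>P2 V E. real (card (Tset V E e (e \<union> f))))"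
    by (rule sum_Q[OF assms])
  also have "\<dots> = real (card (Xset V E))" by (rule sum_X[OF assms])
  also have "\<dots> = 3 * real (card (Kset V E))" using card_X[OF assms] by simp
  finally show ?thesis using L by simp
qed

end
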